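(* Let $\mathcal F$ be a family of graphs in which every member has the same number $e$ of edges, and let $n$ be a positive integer. Then $x(n,\mathcal F)+e=x'(n,\mathcal F)$.
   Context: Search game: given a vertex set $V$ with $|V|=n$, an unknown edge set $E_0$ of pairs from $V$ is hidden such that the graph $(V,E_0)$ is isomorphic to some $F\in\mathcal F$ together with $n-|V(F)|$ isolated vertices. A query is a pair of vertices, answered YES if it lies in $E_0$ and NO otherwise; queries are chosen adaptively by the Questioner and answered consistently by an Adversary. $E_0$ is identified when exactly one admissible edge set is consistent with all answers. $x(n,\mathcal F)$ is the number of NO answers needed in the worst case by the best strategy to identify $E_0$ (only NO answers are counted). $x'(n,\mathcal F)$ is the total number of queries needed in the worst case by the best strategy in the variant where the game ends only when $E_0$ is identified and moreover every pair of $E_0$ has been queried. *)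

theory Defs
  imports Main
begin

definition simple_graph :: "('a set \<times> 'a set set) \<Rightarrow> bool" where
  "simple_graph G \<longleftrightarrow> finite (fst G) \<and> (\<forall>ed\<in>snd G. ed \<subseteq> fst G \<and> card ed = 2)"

definition vpairs :: "nat \<Rightarrow> nat set set" where
  "vpairs n = {p. p \<subseteq> {0..<n} \<and> card p = 2}"

text \<open>Admissible edge sets: E such that (V,E) is isomorphic to some member of the
family together with isolated vertices, i.e. E is the image of the edge set of some
F in the family under an injection of V(F) into V.\<close>
definition admissible :: "nat \<Rightarrow> ('a set \<times> 'a set set) set \<Rightarrow> nat set set set" where
  "admissible n FF = {E. \<exists>G\<in>FF. \<exists>f. inj_on f (fst G) \<and> f ` fst G \<subseteq> {0..<n}
                         \<and> E = (\<lambda>ed. f ` ed) ` snd G}"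

text \<open>Game counting NO answers. win_no P k C: from the state in which C is the set of
admissible edge sets consistent with the answers so far, the Questioner (querying
pairs from P) can force identification with at most k further NO answers.
The Adversary may give any answer consistent with some member of C.\<close>
inductive win_no :: "nat set set \<Rightarrow> nat \<Rightarrow> nat set set set \<Rightarrow> bool" for P where
  finish: "card C = 1 \<Longrightarrow> win_no P k C"
| query: "\<lbrakk> p \<in> P;
            (\<exists>E\<in>C. p \<in> E) \<longrightarrow> win_no P k {E\<in>C. p \<in> E};
            (\<exists>E\<in>C. p \<notin> E) \<longrightarrow> (0 < k \<and> win_no P (k - 1) {E\<in>C. p \<notin> E}) \<rbrakk>
          \<Longrightarrow> win_no P k C"

text \<open>Game counting all queries, ending only when E0 is identified and all its pairs
have been queried. Q is the set of pairs queried so far.\<close>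
inductive win_all :: "nat set set \<Rightarrow> nat \<Rightarrow> nat set set set \<Rightarrow> nat set set \<Rightarrow> bool" for P where
  finish: "card C = 1 \<Longrightarrow> \<Union>C \<subseteq> Q \<Longrightarrow> win_all P k C Q"
| query: "\<lbrakk> p \<in> P; 0 < k;
            (\<exists>E\<in>C. p \<in> E) \<longrightarrow> win_all P (k - 1) {E\<in>C. p \<in> E} (insert p Q);
            (\<exists>E\<in>C. p \<notin> E) \<longrightarrow> win_all P (k - 1) {E\<in>C. p \<notin> E} (insert p Q) \<rbrakk>
          \<Longrightarrow> win_all P k C Q"

definition x_game :: "nat \<Rightarrow> ('a set \<times> 'a set set) set \<Rightarrow> nat" where
  "x_game n FF = (LEAST k. win_no (vpairs n) k (admissible n FF))"

definition x'_game :: "nat \<Rightarrow> ('a set \<times> 'a set set) set \<Rightarrow> nat" where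
  "x'_game n FF = (LEAST k. win_all (vpairs n) k (admissible n FF) {})"

end

theory Submission
  imports Defs
begin

lemma win_no_mono: "win_no P k C \<Longrightarrow> k \<le> k' \<Longrightarrow> win_no P k' C"
proof (induction arbitrary: k' rule: win_no.induct)
  case (finish C k)
  then show ?case by (intro win_no.finish)
next
  case (query p C k)
  show ?case
  proof (rule win_no.query[OF query(1)])
    show "(\<exists>E\<in>C. p \<in> E) \<longrightarrow> win_no P k' {E \<in> C. p \<in> E}" using query by blast
    show "(\<exists>E\<in>C. p \<notin> E) \<longrightarrow> 0 < k' \<and> win_no P (k' - 1) {E \<in> C. p \<notin> E}"
      using query by (metis diff_le_mono less_le_trans)
  qed
qed

lemma win_all_mono: "win_all P k C Q \<Longrightarrow> k \<le> k' \<Longrightarrow> win_all P k' C Q"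
proof (induction arbitrary: k' rule: win_all.induct)
  case (finish C Q k)
  then show ?case by (intro win_all.finish)
next
  case (query p k C Q)
  show ?case
  proof (rule win_all.query[OF query(1)])
    show "0 < k'" using query by linarith
    show "(\<exists>E\<in>C. p \<in> E) \<longrightarrow> win_all P (k' - 1) {E \<in> C. p \<in> E} (insert p Q)"
      using query by (meson diff_le_mono)
    show "(\<exists>E\<in>C. p \<notin> E) \<longrightarrow> win_all P (k' - 1) {E \<in> C. p \<notin> E} (insert p Q)"
      using query by (meson diff_le_mono)
  qed
qed

lemma win_all_single:
  assumes "finite E0" "E0 \<subseteq> P"
  shows "card (E0 - Q) \<le> m \<Longrightarrow> win_all P m {E0} Q"
proof (induction "card (E0 - Q)" arbitrary: Q m)
  case 0
  then have "E0 \<subseteq> Q" using assms by auto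
  then show ?case by (intro win_all.finish) auto
next
  case (Suc x)
  have "E0 - Q \<noteq> {}" using Suc(2) by (metis card.empty nat.simps(3))
  then obtain p where p: "p \<in> E0" "p \<notin> Q" by auto
  have c: "card (E0 - insert p Q) = x"
  proof -
    have "E0 - insert p Q = (E0 - Q) - {p}" by auto
    then show ?thesis using Suc(2) p assms(1) by (simp add: card_Diff_singleton)
  qed
  show ?case
  proof (rule win_all.query)
    show "p \<in> P" using p assms by auto
    show "0 < m" using Suc by linarith
    have "{E \<in> {E0}. p \<in> E} = {E0}" using p by auto
    moreover have "win_all P (m - 1) {E0} (insert p Q)"
      using Suc(1)[OF c[symmetric]] Suc(2,3) c by simp
    ultimately show "(\<exists>E\<in>{E0}. p \<in> E) \<longrightarrow> win_all P (m - 1) {E \<in> {E0}. p \<in> E} (insert p Q)"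
      by simp
    show "(\<exists>E\<in>{E0}. p \<notin> E) \<longrightarrow> win_all P (m - 1) {E \<in> {E0}. p \<notin> E} (insert p Q)"
      using p by auto
  qed
qed

lemma no_to_all:
  "win_no P k C \<Longrightarrow> C \<noteq> {} \<Longrightarrow> \<forall>E\<in>C. E \<inter> Q = Y \<and> card E = e \<and> finite E \<and> E \<subseteq> P
   \<Longrightarrow> win_all P (k + e - card Y) C Q"
proof (induction arbitrary: Q Y rule: win_no.induct)
  case (finish C k)
  then obtain E0 where C: "C = {E0}" by (meson card_1_singletonE)
  then have E0: "E0 \<inter> Q = Y" "card E0 = e" "finite E0" "E0 \<subseteq> P" using finish by auto
  have "card (E0 - Q) = e - card Y" using E0 by (metis card_Diff_subset_Int finite_Int)
  then show ?case unfolding C using win_all_single[OF E0(3,4)] by simp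
next
  case (query p C k)
  have Yc: "card Y \<le> e" using query(4,5)
    by (metis Int_lower1 card_mono ex_in_conv)
  show ?case
  proof (cases "p \<in> Q")
    case True
    show ?thesis
    proof (cases "p \<in> Y")
      case True
      then have "{E \<in> C. p \<in> E} = C" using query(5) by auto
      moreover have "insert p Q = Q" using \<open>p \<in> Q\<close> by auto
      moreover have "\<exists>E\<in>C. p \<in> E" using query(4) calculation(1) by auto
      ultimately show ?thesis using query(2,4,5) by auto
    next
      case False
      then have C2: "{E \<in> C. p \<notin> E} = C" using query(5) \<open>p \<in> Q\<close> by auto
      obtain E where "E \<in> C" using query(4) by auto
      then have "\<exists>E\<in>C. p \<notin> E" using C2 by auto
      then have "0 < k" "win_all P (k - 1 + e - card Y) C Q" using query C2 by auto
      then show ?thesis using win_all_mono by (metis add_le_mono1 diff_le_mono diff_le_self)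
    qed
  next
    case False
    show ?thesis
    proof (rule win_all.query[OF query(1)])
      show "0 < k + e - card Y"
      proof (cases "\<exists>E\<in>C. p \<in> E")
        case True
        then obtain E where E: "E \<in> C" "p \<in> E" by auto
        then have "Y \<subset> E" using query(5) False by auto
        then have "card Y < e" using query(5) E by (metis psubset_card_mono)
        then show ?thesis by linarith
      next
        case F: False
        then have "\<exists>E\<in>C. p \<notin> E" using query(4) by auto
        note mp[OF query(3) this]
        then have "0 < k" by (elim conjE)
        then show ?thesis using Yc by linarith
      qed
      show "(\<exists>E\<in>C. p \<in> E) \<longrightarrow> win_all P (k + e - card Y - 1) {E \<in> C. p \<in> E} (insert p Q)"
      proof
        assume ex: "\<exists>E\<in>C. p \<in> E"
        then obtain E where E: "E \<in> C" "p \<in> E" by auto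
        then have "Y \<subset> E" using query(5) False by auto
        then have lt: "card Y < e" using query(5) E by (metis psubset_card_mono)
        have fY: "finite Y" using \<open>Y \<subset> E\<close> query(5) E by (meson finite_subset psubset_imp_subset)
        have pY: "p \<notin> Y" using query(5) E False by auto
        have inv: "\<forall>E'\<in>{E \<in> C. p \<in> E}. E' \<inter> insert p Q = insert p Y \<and> card E' = e \<and> finite E' \<and> E' \<subseteq> P"
          using query(5) by auto
        have "win_all P (k + e - card (insert p Y)) {E \<in> C. p \<in> E} (insert p Q)"
        proof -
          have ne: "{E \<in> C. p \<in> E} \<noteq> {}" using ex by auto
          have "{E \<in> C. p \<in> E} \<noteq> {} \<longrightarrow> (\<forall>x xa. (\<forall>E\<in>{E \<in> C. p \<in> E}. E \<inter> x = xa \<and> card E = e \<and> finite E \<and> E \<subseteq> P) \<longrightarrow>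
              win_all P (k + e - card xa) {E \<in> C. p \<in> E} x)"
            using mp[OF query(2) ex] by (elim conjE)
          then have "\<forall>x xa. (\<forall>E\<in>{E \<in> C. p \<in> E}. E \<inter> x = xa \<and> card E = e \<and> finite E \<and> E \<subseteq> P) \<longrightarrow>
              win_all P (k + e - card xa) {E \<in> C. p \<in> E} x" using ne by (rule mp)
          then show ?thesis using inv by (elim allE[of _ "insert p Q"] allE[of _ "insert p Y"]) (rule mp)
        qed
        moreover have "card (insert p Y) = Suc (card Y)" using fY pY by (rule card_insert_disjoint)
        moreover have "k + e - Suc (card Y) = k + e - card Y - 1" using lt by linarith
        ultimately show "win_all P (k + e - card Y - 1) {E \<in> C. p \<in> E} (insert p Q)"
          by argo
      qed
      show "(\<exists>E\<in>C. p \<notin> E) \<longrightarrow> win_all P (k + e - card Y - 1) {E \<in> C. p \<notin> E} (insert p Q)"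
      proof
        assume ex: "\<exists>E\<in>C. p \<notin> E"
        have inv: "\<forall>E'\<in>{E \<in> C. p \<notin> E}. E' \<inter> insert p Q = Y \<and> card E' = e \<and> finite E' \<and> E' \<subseteq> P"
          using query(5) by auto
        have ne: "{E \<in> C. p \<notin> E} \<noteq> {}" using ex by auto
        note q3 = mp[OF query(3) ex]
        then have "0 < k" by (elim conjE)
        have imp3: "{E \<in> C. p \<notin> E} \<noteq> {} \<longrightarrow> (\<forall>x xa. (\<forall>E\<in>{E \<in> C. p \<notin> E}. E \<inter> x = xa \<and> card E = e \<and> finite E \<and> E \<subseteq> P) \<longrightarrow>
              win_all P (k - 1 + e - card xa) {E \<in> C. p \<notin> E} x)"
          using q3 by (elim conjE)
        have "0 < k" "win_all P (k - 1 + e - card Y) {E \<in> C. p \<notin> E} (insert p Q)"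
        proof -
          from imp3 ne have "\<forall>x xa. (\<forall>E\<in>{E \<in> C. p \<notin> E}. E \<inter> x = xa \<and> card E = e \<and> finite E \<and> E \<subseteq> P) \<longrightarrow>
              win_all P (k - 1 + e - card xa) {E \<in> C. p \<notin> E} x" by (rule mp)
          then show "win_all P (k - 1 + e - card Y) {E \<in> C. p \<notin> E} (insert p Q)"
            using inv by (elim allE[of _ "insert p Q"] allE[of _ Y]) (rule mp)
          show "0 < k" by fact
        qed
        moreover have "k + e - card Y - 1 = k - 1 + e - card Y" using \<open>0 < k\<close> Yc by linarith
        ultimately show "win_all P (k + e - card Y - 1) {E \<in> C. p \<notin> E} (insert p Q)"
          by argo
      qed
    qed
  qed
qed

lemma all_to_no:
  "win_all P k C Q \<Longrightarrow> C \<noteq> {} \<Longrightarrow> \<forall>E\<in>C. E \<inter> Q = Y \<and> card E = e \<and> finite E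
   \<Longrightarrow> e \<le> k + card Y \<and> win_no P (k + card Y - e) C"
proof (induction arbitrary: Y rule: win_all.induct)
  case (finish C Q k)
  then obtain E0 where C: "C = {E0}" by (meson card_1_singletonE)
  then have "E0 \<subseteq> Q" using finish by auto
  then have "Y = E0" "card E0 = e" using finish C by auto
  then show ?case using finish(1) by (auto intro: win_no.finish)
next
  case (query p k C Q)
  have fY: "finite Y" using query(5,6) by (metis Int_lower1 ex_in_conv finite_subset)
  have B1: "e \<le> k + card Y \<and> win_no P (k + card Y - e) {E \<in> C. p \<in> E}" if ex: "\<exists>E\<in>C. p \<in> E"
  proof -
    have ne: "{E \<in> C. p \<in> E} \<noteq> {}" using ex by auto
    have inv: "\<forall>E'\<in>{E \<in> C. p \<in> E}. E' \<inter> insert p Q = insert p Y \<and> card E' = e \<and> finite E'"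
      using query(6) by auto
    have "{E \<in> C. p \<in> E} \<noteq> {} \<longrightarrow> (\<forall>xa. (\<forall>E\<in>{E \<in> C. p \<in> E}. E \<inter> insert p Q = xa \<and> card E = e \<and> finite E) \<longrightarrow>
        e \<le> k - 1 + card xa \<and> win_no P (k - 1 + card xa - e) {E \<in> C. p \<in> E})"
      using mp[OF query(3) ex] by (elim conjE)
    then have "\<forall>xa. (\<forall>E\<in>{E \<in> C. p \<in> E}. E \<inter> insert p Q = xa \<and> card E = e \<and> finite E) \<longrightarrow>
        e \<le> k - 1 + card xa \<and> win_no P (k - 1 + card xa - e) {E \<in> C. p \<in> E}" using ne by (rule mp)
    then have IH: "e \<le> k - 1 + card (insert p Y) \<and> win_no P (k - 1 + card (insert p Y) - e) {E \<in> C. p \<in> E}"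
      using inv by (elim allE[of _ "insert p Y"]) (rule mp)
    have "card (insert p Y) \<le> Suc (card Y)" using fY by (simp add: card_insert_if)
    then have le: "k - 1 + card (insert p Y) - e \<le> k + card Y - e" using query(2) by linarith
    from IH have i1: "e \<le> k - 1 + card (insert p Y)" by (elim conjE)
    from IH have i2: "win_no P (k - 1 + card (insert p Y) - e) {E \<in> C. p \<in> E}" by (elim conjE)
    show ?thesis
    proof
      show "e \<le> k + card Y" using i1 \<open>card (insert p Y) \<le> Suc (card Y)\<close> query(2) by linarith
      show "win_no P (k + card Y - e) {E \<in> C. p \<in> E}" using win_no_mono[OF i2 le] .
    qed
  qed
  have B2: "e \<le> k - 1 + card Y \<and> win_no P (k - 1 + card Y - e) {E \<in> C. p \<notin> E}" if ex: "\<exists>E\<in>C. p \<notin> E"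
  proof -
    have ne: "{E \<in> C. p \<notin> E} \<noteq> {}" using ex by auto
    have inv: "\<forall>E'\<in>{E \<in> C. p \<notin> E}. E' \<inter> insert p Q = Y \<and> card E' = e \<and> finite E'"
      using query(6) by auto
    have "{E \<in> C. p \<notin> E} \<noteq> {} \<longrightarrow> (\<forall>xa. (\<forall>E\<in>{E \<in> C. p \<notin> E}. E \<inter> insert p Q = xa \<and> card E = e \<and> finite E) \<longrightarrow>
        e \<le> k - 1 + card xa \<and> win_no P (k - 1 + card xa - e) {E \<in> C. p \<notin> E})"
      using mp[OF query(4) ex] by (elim conjE)
    then have "\<forall>xa. (\<forall>E\<in>{E \<in> C. p \<notin> E}. E \<inter> insert p Q = xa \<and> card E = e \<and> finite E) \<longrightarrow>
        e \<le> k - 1 + card xa \<and> win_no P (k - 1 + card xa - e) {E \<in> C. p \<notin> E}" using ne by (rule mp)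
    then show ?thesis using inv by (elim allE[of _ Y]) (rule mp)
  qed
  have bound: "e \<le> k + card Y"
  proof (cases "\<exists>E\<in>C. p \<in> E")
    case True
    then show ?thesis using B1 by blast
  next
    case False
    then have "\<exists>E\<in>C. p \<notin> E" using query(5) by auto
    then show ?thesis using B2 by linarith
  qed
  have W: "win_no P (k + card Y - e) C"
  proof (rule win_no.query[OF query(1)]; intro impI)
    show "win_no P (k + card Y - e) {E \<in> C. p \<in> E}" if "\<exists>E\<in>C. p \<in> E" using B1[OF that] by (elim conjE)
  next
    assume ex: "\<exists>E\<in>C. p \<notin> E"
    have b1: "e \<le> k - 1 + card Y" using B2[OF ex] by (elim conjE)
    have b2: "win_no P (k - 1 + card Y - e) {E \<in> C. p \<notin> E}" using B2[OF ex] by (elim conjE)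
    have eq: "k + card Y - e - 1 = k - 1 + card Y - e" using query(2) by linarith
    show "0 < k + card Y - e \<and> win_no P (k + card Y - e - 1) {E \<in> C. p \<notin> E}"
    proof
      show "0 < k + card Y - e" using b1 query(2) by linarith
      show "win_no P (k + card Y - e - 1) {E \<in> C. p \<notin> E}" unfolding eq by (rule b2)
    qed
  qed
  show ?case using bound W by (rule conjI)
qed

lemma win_all_exists:
  assumes "finite P"
  shows "C \<noteq> {} \<Longrightarrow> \<forall>E\<in>C. E \<subseteq> P \<and> E \<inter> Q = Y \<Longrightarrow> win_all P (card (P - Q)) C Q"
proof (induction "card (P - Q)" arbitrary: Q Y C)
  case 0
  then have "P \<subseteq> Q" using assms by auto
  then have "\<forall>E\<in>C. E = Y" using 0(3) by auto
  then have C: "C = {Y}" using 0(2) by auto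
  have "\<Union>C \<subseteq> Q" using C 0(3) by auto
  then show ?case using C by (intro win_all.finish) auto
next
  case (Suc x)
  have "P - Q \<noteq> {}" using Suc(2) by (metis card.empty nat.simps(3))
  then obtain p where p: "p \<in> P" "p \<notin> Q" by auto
  have c: "x = card (P - insert p Q)"
  proof -
    have "P - insert p Q = (P - Q) - {p}" by auto
    then show ?thesis using Suc(2) p assms by (simp add: card_Diff_singleton)
  qed
  have k: "card (P - Q) - 1 = card (P - insert p Q)" using c Suc(2) by linarith
  show ?case
  proof (rule win_all.query[OF p(1)]; (intro impI)?)
    show "0 < card (P - Q)" using Suc(2) by linarith
  next
    assume ex: "\<exists>E\<in>C. p \<in> E"
    have inv: "\<forall>E\<in>{E \<in> C. p \<in> E}. E \<subseteq> P \<and> E \<inter> insert p Q = insert p Y" using Suc(4) by auto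
    have ne: "{E \<in> C. p \<in> E} \<noteq> {}" using ex by auto
    show "win_all P (card (P - Q) - 1) {E \<in> C. p \<in> E} (insert p Q)"
      unfolding k by (rule Suc(1)[OF c ne inv])
  next
    assume ex: "\<exists>E\<in>C. p \<notin> E"
    have inv: "\<forall>E\<in>{E \<in> C. p \<notin> E}. E \<subseteq> P \<and> E \<inter> insert p Q = Y" using Suc(4) by auto
    have ne: "{E \<in> C. p \<notin> E} \<noteq> {}" using ex by auto
    show "win_all P (card (P - Q) - 1) {E \<in> C. p \<notin> E} (insert p Q)"
      unfolding k by (rule Suc(1)[OF c ne inv])
  qed
qed

lemma finite_vpairs: "finite (vpairs n)"
proof -
  have "vpairs n \<subseteq> Pow {0..<n}" unfolding vpairs_def by auto
  then show ?thesis by (rule finite_subset) simp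
qed

lemma admissible_props:
  assumes "\<forall>G\<in>FF. simple_graph G" "\<forall>G\<in>FF. card (snd G) = e" "E \<in> admissible n FF"
  shows "E \<subseteq> vpairs n \<and> card E = e \<and> finite E"
proof -
  obtain G f where G: "G \<in> FF" "inj_on f (fst G)" "f ` fst G \<subseteq> {0..<n}"
    "E = (\<lambda>ed. f ` ed) ` snd G"
    using assms(3) unfolding admissible_def by blast
  have sg: "\<forall>ed\<in>snd G. ed \<subseteq> fst G \<and> card ed = 2" using assms(1) G(1) unfolding simple_graph_def by blast
  have sub: "E \<subseteq> vpairs n"
  proof
    fix x assume "x \<in> E"
    then obtain ed where ed: "ed \<in> snd G" "x = f ` ed" using G(4) by blast
    have "card (f ` ed) = card ed" using inj_on_subset[OF G(2)] sg ed(1) by (metis card_image)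
    then show "x \<in> vpairs n" using ed sg G(3) unfolding vpairs_def by auto
  qed
  have "inj_on (image f) (snd G)"
    using inj_on_subset[OF inj_on_image_Pow[OF G(2)]] sg by auto
  then have "card E = e" using G(4) card_image assms(2) G(1) by metis
  moreover have "finite E" using sub finite_vpairs by (rule finite_subset)
  ultimately show ?thesis using sub by blast
qed

theorem proposition4p2:
  fixes FF :: "('a set \<times> 'a set set) set" and e n :: nat
  assumes "\<forall>G\<in>FF. simple_graph G"
    and "\<forall>G\<in>FF. card (snd G) = e"
    and "0 < n"
    and "admissible n FF \<noteq> {}"
  shows "x_game n FF + e = x'_game n FF"
proof -
  let ?A = "admissible n FF" and ?P = "vpairs n"
  have props: "\<forall>E\<in>?A. E \<subseteq> ?P \<and> card E = e \<and> finite E"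
    using admissible_props[OF assms(1,2)] by blast
  have "win_all ?P (card (?P - {})) ?A {}"
    by (rule win_all_exists[OF finite_vpairs assms(4)]) (use props in auto)
  then have w': "win_all ?P (x'_game n FF) ?A {}" unfolding x'_game_def by (rule LeastI)
  have inv0: "\<forall>E\<in>?A. E \<inter> {} = ({}::nat set set) \<and> card E = e \<and> finite E" using props by auto
  have "e \<le> x'_game n FF + card ({}::nat set set) \<and> win_no ?P (x'_game n FF + card ({}::nat set set) - e) ?A"
    by (rule all_to_no[OF w' assms(4) inv0])
  then have le1: "e \<le> x'_game n FF" and wn: "win_no ?P (x'_game n FF - e) ?A" by auto
  have l2: "x_game n FF \<le> x'_game n FF - e" unfolding x_game_def using wn by (rule Least_le)
  have wn0: "win_no ?P (x_game n FF) ?A" unfolding x_game_def using wn by (rule LeastI)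
  have inv1: "\<forall>E\<in>?A. E \<inter> {} = ({}::nat set set) \<and> card E = e \<and> finite E \<and> E \<subseteq> ?P" using props by auto
  have "win_all ?P (x_game n FF + e - card ({}::nat set set)) ?A {}"
    by (rule no_to_all[OF wn0 assms(4) inv1])
  then have "x'_game n FF \<le> x_game n FF + e" unfolding x'_game_def by (simp add: Least_le)
  then show ?thesis using l2 le1 by linarith
qed

end
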